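(* For every integer $n$ and every integer $r$ with $3\le r\le n-2$, $A(n,r-1)\,(A(n,r-1)-1) > 2A(n,3r-2)$.
   Context: $A(n,q)$ is the Eulerian number, the number of permutations of $\{1,\dots,n\}$ with exactly $q$ ascents, with the convention $A(n,q)=0$ if $q\ge n$. *)

theory Defs
  imports "HOL-Combinatorics.Permutations"
begin

definition ascents :: "nat \<Rightarrow> (nat \<Rightarrow> nat) \<Rightarrow> nat" where
  "ascents n p = card {i \<in> {1..<n}. p i < p (Suc i)}"

definition eulerian :: "nat \<Rightarrow> nat \<Rightarrow> nat" where
  "eulerian n q = card {p. p permutes {1..n} \<and> ascents n p = q}"

end

theory Submission
  imports Defs "HOL-Combinatorics.Multiset_Permutations"
begin

fun lasc :: "nat list \<Rightarrow> nat" where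
  "lasc (x # y # zs) = (if x < y then 1 else 0) + lasc (y # zs)"
| "lasc [x] = 0"
| "lasc [] = 0"

lemma card_lt_sum: "card {i. i < (L::nat) \<and> P i} = (\<Sum>i<L. if P i then 1 else 0)"
proof (induction L)
  case 0 then show ?case by simp
next
  case (Suc L)
  have "{i. i < Suc L \<and> P i} = {i. i < L \<and> P i} \<union> (if P L then {L} else {})"
    by (auto simp: less_Suc_eq)
  then show ?case using Suc by (simp add: card_insert_if)
qed

lemma card_Suc_split:
  "card {i. i < Suc L \<and> P i} = (if P 0 then 1 else 0) + card {i. i < L \<and> P (Suc i)}"
  unfolding card_lt_sum by (subst sum.lessThan_Suc_shift) simp

lemma lasc_card: "lasc xs = card {i. Suc i < length xs \<and> xs ! i < xs ! Suc i}"
proof (induction xs rule: lasc.induct)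
  case (1 x y zs)
  have "{i. Suc i < length (x # y # zs) \<and> (x # y # zs) ! i < (x # y # zs) ! Suc i}
      = {i. i < Suc (length zs) \<and> (x # y # zs) ! i < (x # y # zs) ! Suc i}" by auto
  moreover have "{i. Suc i < length (y # zs) \<and> (y # zs) ! i < (y # zs) ! Suc i}
      = {i. i < length zs \<and> (y # zs) ! i < (y # zs) ! Suc i}" by auto
  ultimately show ?case using 1 by (simp add: card_Suc_split)
qed auto

lemma ascents_lasc: "ascents n p = lasc (map p [1..<Suc n])"
proof -
  have "lasc (map p [1..<Suc n]) = card {i. Suc i < n \<and> p (Suc i) < p (Suc (Suc i))}"
    unfolding lasc_card by (rule arg_cong[where f=card]) (auto simp del: upt_Suc simp: nth_upt)
  also have "\<dots> = card (Suc ` {i. Suc i < n \<and> p (Suc i) < p (Suc (Suc i))})"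
    by (simp add: card_image)
  also have "Suc ` {i. Suc i < n \<and> p (Suc i) < p (Suc (Suc i))} = {i \<in> {1..<n}. p i < p (Suc i)}"
    apply (auto simp: image_iff)
    subgoal for i by (rule exI[of _ "i - 1"]) auto
    done
  finally show ?thesis unfolding ascents_def by simp
qed

lemma eulerian_list: "eulerian n k = card {xs \<in> permutations_of_set {1..n}. lasc xs = k}"
proof -
  let ?f = "\<lambda>p. map p [1..<Suc n]"
  let ?S = "{p. p permutes {1..n} \<and> ascents n p = k}"
  have inj: "inj_on ?f ?S"
  proof (rule inj_onI)
    fix p q assume p: "p \<in> ?S" and q: "q \<in> ?S" and eq: "?f p = ?f q"
    show "p = q"
    proof
      fix i
      show "p i = q i"
      proof (cases "i \<in> {1..n}")
        case True then show ?thesis using eq by (auto simp: map_eq_conv)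
      next
        case False
        have pp: "p permutes {1..n}" and qq: "q permutes {1..n}" using p q by auto
        show ?thesis using permutes_not_in[OF pp False] permutes_not_in[OF qq False] by simp
      qed
    qed
  qed
  have img: "?f ` ?S = {xs \<in> permutations_of_set {1..n}. lasc xs = k}"
  proof (rule set_eqI, rule iffI)
    fix xs assume "xs \<in> ?f ` ?S"
    then obtain p where p: "p permutes {1..n}" "ascents n p = k" and xs: "xs = ?f p" by auto
    have "distinct xs" unfolding xs using p(1)
      by (simp add: distinct_map permutes_inj_on)
    moreover have "set xs = {1..n}" unfolding xs using permutes_image[OF p(1)]
      by (simp del: upt_Suc add: atLeastLessThanSuc_atLeastAtMost)
    ultimately show "xs \<in> {xs \<in> permutations_of_set {1..n}. lasc xs = k}"
      using p(2) xs by (simp add: permutations_of_set_def ascents_lasc)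
  next
    fix xs assume xs: "xs \<in> {xs \<in> permutations_of_set {1..n}. lasc xs = k}"
    then have d: "distinct xs" and s: "set xs = {1..n}" and l: "lasc xs = k"
      by (auto simp: permutations_of_set_def)
    have len: "length xs = n" using distinct_card[OF d] s by simp
    define p where "p i = (if i \<in> {1..n} then xs ! (i - 1) else i)" for i
    have mp: "?f p = xs"
      by (rule nth_equalityI) (auto simp del: upt_Suc simp: len p_def nth_upt)
    have "bij_betw p {1..n} {1..n}"
    proof -
      have "inj_on p {1..n}"
        by (rule inj_onI) (auto simp: p_def len nth_eq_iff_index_eq[OF d])
      moreover have "p ` {1..n} = {1..n}"
      proof -
        have "p ` {1..n} = set (?f p)" by (simp del: upt_Suc add: atLeastLessThanSuc_atLeastAtMost)
        then show ?thesis using mp s by metis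
      qed
      ultimately show ?thesis by (simp add: bij_betw_def)
    qed
    then have "p permutes {1..n}" by (rule bij_imp_permutes) (auto simp: p_def)
    moreover have "ascents n p = k" using l mp by (simp add: ascents_lasc)
    ultimately show "xs \<in> ?f ` ?S" using mp[symmetric] by (intro image_eqI[where x=p]) auto
  qed
  show ?thesis unfolding eulerian_def using card_image[OF inj] img by simp
qed

definition ins :: "nat \<Rightarrow> nat \<Rightarrow> nat list \<Rightarrow> nat list" where
  "ins m j ys = take j ys @ m # drop j ys"

lemma ins_0 [simp]: "ins m 0 ys = m # ys"
  by (simp add: ins_def)

lemma ins_Suc_Cons [simp]: "ins m (Suc j) (x # ys) = x # ins m j ys"
  by (simp add: ins_def)

lemma ins_Suc_Nil [simp]: "ins m (Suc j) [] = [m]"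
  by (simp add: ins_def)

lemma lasc_Cons_gt: "\<forall>x\<in>set ys. x < m \<Longrightarrow> lasc (m # ys) = lasc ys"
  by (cases ys) auto

lemma lasc_less: "ys \<noteq> [] \<Longrightarrow> lasc ys < length ys"
  by (induction ys rule: lasc.induct) auto

lemma ins_asc:
  "\<forall>x\<in>set ys. x < m \<Longrightarrow> j \<le> length ys \<Longrightarrow>
     lasc (ins m j ys) = lasc ys \<or> lasc (ins m j ys) = Suc (lasc ys)"
proof (induction ys arbitrary: j)
  case Nil then show ?case by simp
next
  case (Cons x ys)
  show ?case
  proof (cases j)
    case 0 then show ?thesis using Cons.prems lasc_Cons_gt[of "x # ys" m] by simp
  next
    case (Suc j')
    show ?thesis
    proof (cases ys)
      case Nil then show ?thesis using Suc Cons.prems by simp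
    next
      case (Cons y zs)
      show ?thesis
      proof (cases j')
        case 0 then show ?thesis using Suc Cons Cons.prems lasc_Cons_gt[of "y # zs" m] by simp
      next
        case (Suc j'')
        have ih: "lasc (ins m j' ys) = lasc ys \<or> lasc (ins m j' ys) = Suc (lasc ys)"
          using Cons.IH[of j'] Cons.prems \<open>j = Suc j'\<close> by simp
        then show ?thesis using \<open>j = Suc j'\<close> Suc \<open>ys = y # zs\<close> by auto
      qed
    qed
  qed
qed

lemma ins_count:
  "\<forall>x\<in>set ys. x < m \<Longrightarrow>
     card {j. j \<le> length ys \<and> lasc (ins m j ys) = Suc (lasc ys)} = length ys - lasc ys"
proof (induction ys)
  case Nil
  have "{j. j \<le> length [] \<and> lasc (ins m j []) = Suc (lasc [])} = {}" by auto
  then show ?case by simp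
next
  case (Cons x ys)
  note pr = Cons.prems
  note IHo = Cons.IH
  have e1: "{j. j \<le> length (x # ys) \<and> P j} = {j. j < Suc (Suc (length ys)) \<and> P j}" for P
    by auto
  have e2: "{j. j \<le> length ys \<and> P j} = {j. j < Suc (length ys) \<and> P j}" for P
    by auto
  have m0: "lasc (ins m 0 (x # ys)) \<noteq> Suc (lasc (x # ys))"
    using Cons.prems lasc_Cons_gt[of "x # ys" m] by simp
  show ?case
  proof (cases ys)
    case Nil
    have "{j. j < Suc 0 \<and> lasc (x # ins m j []) = Suc 0} = {0}" using pr Nil by auto
    then show ?thesis unfolding e1 using Nil m0 by (simp add: card_Suc_split)
  next
    case (Cons y zs)
    have hy: "\<forall>x\<in>set ys. x < m" using pr by simp
    have IH: "card {j. j < Suc (length ys) \<and> lasc (ins m j ys) = Suc (lasc ys)} = length ys - lasc ys"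
      using IHo[OF hy] unfolding e2 .
    have q0: "lasc (ins m 0 ys) \<noteq> Suc (lasc ys)"
      using hy lasc_Cons_gt[of ys m] by simp
    have IH2: "card {j. j < length ys \<and> lasc (ins m (Suc j) ys) = Suc (lasc ys)} = length ys - lasc ys"
      using IH q0 by (simp only: card_Suc_split; simp)
    have a0: "(lasc (x # ins m 0 ys) = Suc (lasc (x # ys))) = (\<not> x < y)"
      using \<open>ys = y # zs\<close> hy pr lasc_Cons_gt[of ys m] by simp
    have aS: "(lasc (x # ins m (Suc j) ys) = Suc (lasc (x # ys))) = (lasc (ins m (Suc j) ys) = Suc (lasc ys))" for j
      using \<open>ys = y # zs\<close> by simp
    have lt: "lasc ys < length ys" using lasc_less \<open>ys = y # zs\<close> by blast
    have "card {j. j \<le> length (x # ys) \<and> lasc (ins m j (x # ys)) = Suc (lasc (x # ys))}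
        = card {j. j < Suc (length ys) \<and> lasc (x # ins m j ys) = Suc (lasc (x # ys))}"
      unfolding e1 using m0 by (simp only: card_Suc_split; simp)
    also have "\<dots> = (if \<not> x < y then 1 else 0) + (length ys - lasc ys)"
      using a0 aS IH2 by (simp only: card_Suc_split; simp)
    also have "\<dots> = length (x # ys) - lasc (x # ys)"
      using lt \<open>ys = y # zs\<close> by auto
    finally show ?thesis .
  qed
qed

lemma ins_count_eq:
  assumes "\<forall>x\<in>set ys. x < m"
  shows "card {j. j \<le> length ys \<and> lasc (ins m j ys) = lasc ys} = Suc (lasc ys)"
proof -
  let ?A = "{j. j \<le> length ys \<and> lasc (ins m j ys) = lasc ys}"
  let ?B = "{j. j \<le> length ys \<and> lasc (ins m j ys) = Suc (lasc ys)}"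
  have "?A \<union> ?B = {..length ys}"
  proof (rule set_eqI)
    fix j show "j \<in> ?A \<union> ?B \<longleftrightarrow> j \<in> {..length ys}"
      using ins_asc[OF assms, of j] by auto
  qed
  moreover have "card (?A \<union> ?B) = card ?A + card ?B"
    by (rule card_Un_disjoint) auto
  ultimately have "card ?A + card ?B = Suc (length ys)"
    by simp
  moreover have "card ?B = length ys - lasc ys" using ins_count[OF assms] .
  moreover have "lasc ys \<le> length ys"
    using lasc_less[of ys] by (cases "ys = []") auto
  ultimately show ?thesis by linarith
qed

lemma count_k:
  assumes "\<forall>x\<in>set ys. x < m"
  shows "card {j. j \<le> length ys \<and> lasc (ins m j ys) = k}
    = (if lasc ys = k then Suc k else 0) + (if Suc (lasc ys) = k then length ys - lasc ys else 0)"
proof (cases "lasc ys = k")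
  case True then show ?thesis using ins_count_eq[OF assms] by simp
next
  case F: False
  show ?thesis
  proof (cases "Suc (lasc ys) = k")
    case True then show ?thesis using ins_count[OF assms] F by simp
  next
    case False
    have "False" if "j \<le> length ys" "lasc (ins m j ys) = k" for j
      using ins_asc[OF assms that(1)] that(2) F False by auto
    then have "{j. j \<le> length ys \<and> lasc (ins m j ys) = k} = {}"
      by auto
    then show ?thesis using F False by simp
  qed
qed

lemma eul_0: "eulerian 0 k = (if k = 0 then 1 else 0)"
proof -
  have "{xs \<in> permutations_of_set {1..0::nat}. lasc xs = k} = (if k = 0 then {[]} else {})"
    by auto
  then show ?thesis by (simp add: eulerian_list)
qed

lemma sum_if_card: "finite A \<Longrightarrow> (\<Sum>x\<in>A. if P x then c else 0) = c * card {x\<in>A. P x}"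
  by (simp add: sum.inter_filter[symmetric])

lemma memP: "ys \<in> permutations_of_set {1..n} \<Longrightarrow> distinct ys \<and> set ys = {1..n} \<and> length ys = n"
  by (auto simp: permutations_of_set_def length_finite_permutations_of_set)

lemma ins_inj:
  "inj_on (\<lambda>(ys, j). ins (Suc n) j ys) (SIGMA ys:permutations_of_set {1..n}. {j. j \<le> n \<and> Q ys j})"
proof (rule inj_onI, clarify)
  fix ys j ys' j'
  assume a: "ys \<in> permutations_of_set {1..n}" "j \<le> n" "ys' \<in> permutations_of_set {1..n}" "j' \<le> n"
    and eq: "ins (Suc n) j ys = ins (Suc n) j' ys'"
  have y: "Suc n \<notin> set ys" "length ys = n" using memP[OF a(1)] by auto
  have y': "Suc n \<notin> set ys'" "length ys' = n" using memP[OF a(3)] by auto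
  have "Suc n \<notin> set (take j ys)" "Suc n \<notin> set (drop j ys)"
    using y(1) by (auto dest: in_set_takeD in_set_dropD)
  then have td: "take j ys = take j' ys' \<and> drop j ys = drop j' ys'"
    using eq unfolding ins_def by (simp add: append_Cons_eq_iff)
  then have "ys = ys'" by (metis append_take_drop_id)
  have "j = length (take j ys)" using y a by simp
  also have "\<dots> = length (take j' ys')" using td by simp
  also have "\<dots> = j'" using y' a by simp
  finally show "ys = ys' \<and> j = j'" using \<open>ys = ys'\<close> by simp
qed

lemma ins_distinct: "distinct ys \<Longrightarrow> m \<notin> set ys \<Longrightarrow> distinct (ins m j ys)"
proof -
  assume d: "distinct ys" and m: "m \<notin> set ys"
  have "distinct (take j ys @ drop j ys)" using d by simp
  then have "distinct (take j ys) \<and> distinct (drop j ys) \<and> set (take j ys) \<inter> set (drop j ys) = {}"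
    by (simp only: distinct_append)
  moreover have "m \<notin> set (take j ys)" "m \<notin> set (drop j ys)"
    using m by (auto dest: in_set_takeD in_set_dropD)
  ultimately show ?thesis unfolding ins_def by auto
qed

lemma set_ins: "set (ins m j ys) = insert m (set ys)"
proof -
  have "set (take j ys) \<union> set (drop j ys) = set ys" by (metis append_take_drop_id set_append)
  then show ?thesis unfolding ins_def by auto
qed

lemma ins_img:
  "(\<lambda>(ys, j). ins (Suc n) j ys) ` (SIGMA ys:permutations_of_set {1..n}. {j. j \<le> n \<and> lasc (ins (Suc n) j ys) = k})
   = {xs \<in> permutations_of_set {1..Suc n}. lasc xs = k}"
proof (rule set_eqI, rule iffI)
  fix xs assume "xs \<in> (\<lambda>(ys, j). ins (Suc n) j ys) ` (SIGMA ys:permutations_of_set {1..n}. {j. j \<le> n \<and> lasc (ins (Suc n) j ys) = k})"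
  then obtain ys j where ys: "ys \<in> permutations_of_set {1..n}" "lasc (ins (Suc n) j ys) = k"
    and xs: "xs = ins (Suc n) j ys" by auto
  have d: "distinct ys" "set ys = {1..n}" using memP[OF ys(1)] by auto
  have "Suc n \<notin> set ys" using d by auto
  then have "distinct xs" unfolding xs using d(1) ins_distinct by blast
  moreover have "set xs = {1..Suc n}" unfolding xs set_ins using d(2) by auto
  ultimately show "xs \<in> {xs \<in> permutations_of_set {1..Suc n}. lasc xs = k}"
    using ys(2) xs by (simp add: permutations_of_set_def)
next
  fix xs assume xs: "xs \<in> {xs \<in> permutations_of_set {1..Suc n}. lasc xs = k}"
  then have d: "distinct xs" "set xs = {1..Suc n}" "lasc xs = k" "length xs = Suc n"
    using memP[of xs "Suc n"] by auto
  then have "Suc n \<in> set xs" by auto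
  then obtain as bs where ab: "xs = as @ Suc n # bs" by (meson split_list)
  have "distinct (as @ bs)" using d(1) ab by simp
  moreover have "set (as @ bs) = {1..n}"
  proof -
    have "Suc n \<notin> set as" "Suc n \<notin> set bs" using d(1) ab by auto
    then have "set (as @ bs) = set xs - {Suc n}" using ab by auto
    also have "\<dots> = {1..n}" using d(2) by (simp add: atLeastAtMostSuc_conv)
    finally show ?thesis .
  qed
  ultimately have ysP: "as @ bs \<in> permutations_of_set {1..n}" by (simp add: permutations_of_set_def)
  have ie: "ins (Suc n) (length as) (as @ bs) = xs" using ab by (simp add: ins_def)
  have "length as \<le> n" using d(4) ab by simp
  show "xs \<in> (\<lambda>(ys, j). ins (Suc n) j ys) ` (SIGMA ys:permutations_of_set {1..n}. {j. j \<le> n \<and> lasc (ins (Suc n) j ys) = k})"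
  proof (rule image_eqI[where x="(as @ bs, length as)"])
    show "xs = (\<lambda>(ys, j). ins (Suc n) j ys) (as @ bs, length as)" using ie by simp
    show "(as @ bs, length as) \<in> (SIGMA ys:permutations_of_set {1..n}. {j. j \<le> n \<and> lasc (ins (Suc n) j ys) = k})"
      using ysP d(3) ie \<open>length as \<le> n\<close> by simp
  qed
qed

lemma eul_Suc: "eulerian (Suc n) k = Suc k * eulerian n k
    + (if k = 0 then 0 else (Suc n - k) * eulerian n (k - 1))"
proof -
  let ?P = "permutations_of_set {1..n}"
  let ?g = "\<lambda>(ys, j). ins (Suc n) j ys"
  let ?S = "SIGMA ys:?P. {j. j \<le> n \<and> lasc (ins (Suc n) j ys) = k}"
  have "eulerian (Suc n) k = card (?g ` ?S)" using ins_img[of n k] by (simp add: eulerian_list)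
  also have "\<dots> = card ?S" using card_image[OF ins_inj] .
  also have "\<dots> = (\<Sum>ys\<in>?P. card {j. j \<le> n \<and> lasc (ins (Suc n) j ys) = k})"
    by (rule card_SigmaI) auto
  also have "\<dots> = (\<Sum>ys\<in>?P. (if lasc ys = k then Suc k else 0)
        + (if Suc (lasc ys) = k then n - lasc ys else 0))"
  proof (rule sum.cong[OF refl])
    fix ys assume ys: "ys \<in> ?P"
    have "\<forall>x\<in>set ys. x < Suc n" using memP[OF ys] by auto
    from count_k[OF this, of k] show "card {j. j \<le> n \<and> lasc (ins (Suc n) j ys) = k} =
        (if lasc ys = k then Suc k else 0) + (if Suc (lasc ys) = k then n - lasc ys else 0)"
      using memP[OF ys] by simp
  qed
  also have "\<dots> = Suc k * eulerian n k + (if k = 0 then 0 else (Suc n - k) * eulerian n (k - 1))"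
  proof -
    have s1: "(\<Sum>ys\<in>?P. if lasc ys = k then Suc k else 0) = Suc k * eulerian n k"
      by (simp add: sum_if_card eulerian_list)
    have s2: "(\<Sum>ys\<in>?P. if Suc (lasc ys) = k then n - lasc ys else 0)
        = (if k = 0 then 0 else (Suc n - k) * eulerian n (k - 1))"
    proof (cases k)
      case 0 then show ?thesis by simp
    next
      case (Suc k')
      have "(\<Sum>ys\<in>?P. if Suc (lasc ys) = k then n - lasc ys else 0)
          = (\<Sum>ys\<in>?P. if lasc ys = k' then n - k' else 0)"
        by (rule sum.cong) (auto simp: Suc)
      also have "\<dots> = (n - k') * eulerian n k'" by (simp add: sum_if_card eulerian_list)
      finally show ?thesis using Suc by simp
    qed
    show ?thesis using s1 s2 by (simp add: sum.distrib)
  qed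
  finally show ?thesis .
qed

lemma E_big: "n < k \<Longrightarrow> eulerian n k = 0"
proof (induction n arbitrary: k)
  case 0 then show ?case by (simp add: eul_0)
next
  case (Suc n)
  then show ?case by (simp add: eul_Suc)
qed

lemma E_zero: "0 < n \<Longrightarrow> n \<le> k \<Longrightarrow> eulerian n k = 0"
proof (cases "n = k")
  case True
  assume "0 < n"
  then obtain n' where n': "n = Suc n'" by (cases n) auto
  have "eulerian (Suc n') (Suc n') = 0" using E_big[of n' "Suc n'"] by (simp add: eul_Suc)
  then show ?thesis using True n' by simp
next
  case False
  assume "n \<le> k"
  with False show ?thesis using E_big by simp
qed

lemma E_L2: "k < n \<Longrightarrow> (k+1)^(n-k-1) \<le> eulerian n k"
proof (induction n arbitrary: k)
  case 0 then show ?case by simp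
next
  case (Suc n)
  show ?case
  proof (cases "k < n")
    case True
    have "(k+1)^(Suc n-k-1) = (k+1) * (k+1)^(n-k-1)"
      using True by (simp add: Suc_diff_Suc power_Suc[symmetric])
    also have "\<dots> \<le> (k+1) * eulerian n k" by (rule mult_le_mono2[OF Suc.IH[OF True]])
    also have "\<dots> \<le> eulerian (Suc n) k" by (simp add: eul_Suc)
    finally show ?thesis .
  next
    case False
    then have k: "k = n" using Suc.prems by simp
    show ?thesis
    proof (cases n)
      case 0 then show ?thesis using k by (simp add: eul_Suc eul_0)
    next
      case (Suc n')
      have "1 \<le> eulerian n n'" using Suc.IH[of n'] Suc by simp
      then show ?thesis using k Suc by (simp add: eul_Suc)
    qed
  qed
qed

lemma E_sym: "k < n \<Longrightarrow> eulerian n k = eulerian n (n - 1 - k)"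
proof (induction n arbitrary: k)
  case 0 then show ?case by simp
next
  case (Suc n)
  note IH = Suc.IH
  show ?case
  proof (cases "k < n")
    case True
    have a: "eulerian n k = eulerian n (n - 1 - k)" using IH[OF True] .
    show ?thesis
    proof (cases k)
      case 0
      have "eulerian n n = 0" using True 0 E_zero[of n n] by simp
      then show ?thesis using 0 a True by (simp add: eul_Suc)
    next
      case (Suc k')
      define m where "m = n - 1 - k"
      have b: "eulerian n k' = eulerian n (Suc m)" 
      proof -
        have "k' < n" using True Suc by simp
        then have "eulerian n k' = eulerian n (n - 1 - k')" using IH by blast
        moreover have "n - 1 - k' = Suc m" unfolding m_def using True Suc by simp
        ultimately show ?thesis by simp
      qed
      have L: "eulerian (Suc n) k = (k+1)*eulerian n k + (Suc n - k)*eulerian n k'"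
        using Suc by (simp add: eul_Suc)
      have R: "eulerian (Suc n) (Suc m) = Suc (Suc m) * eulerian n (Suc m) + (Suc n - Suc m) * eulerian n m"
        by (simp add: eul_Suc)
      have e1: "Suc n - 1 - k = Suc m" "Suc (Suc m) = Suc n - k" "Suc n - Suc m = k + 1"
        using True unfolding m_def by auto
      show ?thesis using L R e1 a b unfolding m_def[symmetric] by simp
    qed
  next
    case False
    then have k: "k = n" using Suc.prems by simp
    show ?thesis
    proof (cases n)
      case 0 then show ?thesis using k by simp
    next
      case (Suc n')
      have "eulerian n n = 0" using E_zero[of n n] Suc by simp
      moreover have "eulerian n n' = eulerian n 0" using Suc.IH[of n'] Suc by simp
      ultimately show ?thesis using k Suc by (simp add: eul_Suc)
    qed
  qed
qed

lemma binom_key: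
  assumes "j \<le> n"
  shows "x * ((x + j) choose n) = (j + 1) * ((x + j) choose (n + 1)) + (n - j) * ((x + j + 1) choose (n + 1))"
proof -
  obtain e where e: "n = j + e" using assms le_Suc_ex by blast
  define y where "y = x + j"
  define a where "a = y choose n"
  define b where "b = y choose Suc n"
  have h: "Suc y * a = (a + b) * Suc n"
    unfolding a_def b_def using Suc_times_binomial_eq[of y n] by simp
  have hi: "(int x + int j + 1) * int a = (int a + int b) * (int j + int e + 1)"
  proof -
    have "int (Suc y * a) = int ((a + b) * Suc n)" using h by simp
    then show ?thesis unfolding y_def e by (simp add: algebra_simps)
  qed
  have "(int j + int e + 1) * (int x * int a - ((int j + 1) * int b + int e * (int a + int b))) = 0"
    using hi by algebra
  then have "int x * int a = (int j + 1) * int b + int e * (int a + int b)"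
    by (simp add: add_pos_pos)
  then have "int (x * a) = int ((j + 1) * b + e * (a + b))" by (simp add: algebra_simps)
  then have "x * a = (j + 1) * b + e * (a + b)" by (simp only: of_nat_eq_iff)
  then show ?thesis unfolding a_def b_def y_def e by simp
qed

lemma worpitzky: "x ^ n = (\<Sum>j\<le>n. eulerian n j * ((x + j) choose n))"
proof (induction n)
  case 0 then show ?case by (simp add: eul_0)
next
  case (Suc n)
  have "x ^ Suc n = (\<Sum>j\<le>n. eulerian n j * (x * ((x + j) choose n)))"
    using Suc by (simp add: sum_distrib_left algebra_simps)
  also have "\<dots> = (\<Sum>j\<le>n. eulerian n j * ((j + 1) * ((x + j) choose (n + 1))
       + (n - j) * ((x + j + 1) choose (n + 1))))"
    by (rule sum.cong) (simp_all add: binom_key)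
  also have "\<dots> = (\<Sum>j\<le>n. Suc j * eulerian n j * ((x + j) choose Suc n))
       + (\<Sum>j\<le>n. (n - j) * eulerian n j * ((x + Suc j) choose Suc n))"
    by (simp add: sum.distrib algebra_simps)
  also have "(\<Sum>j\<le>n. Suc j * eulerian n j * ((x + j) choose Suc n))
      = (\<Sum>j\<le>Suc n. Suc j * eulerian n j * ((x + j) choose Suc n))"
    by (simp add: E_big)
  also have "(\<Sum>j\<le>n. (n - j) * eulerian n j * ((x + Suc j) choose Suc n))
      = (\<Sum>j\<le>Suc n. (if j = 0 then 0 else (Suc n - j) * eulerian n (j - 1)) * ((x + j) choose Suc n))"
    by (subst sum.atMost_Suc_shift) simp
  also have "(\<Sum>j\<le>Suc n. Suc j * eulerian n j * ((x + j) choose Suc n))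
      + (\<Sum>j\<le>Suc n. (if j = 0 then 0 else (Suc n - j) * eulerian n (j - 1)) * ((x + j) choose Suc n))
      = (\<Sum>j\<le>Suc n. eulerian (Suc n) j * ((x + j) choose Suc n))"
    by (simp add: sum.distrib[symmetric] eul_Suc algebra_simps)
  finally show ?case .
qed

lemma binom_step_le: "((y + 1) choose n) \<le> (if y + 1 = n then 1 else 0) + (n + 1) * (y choose n)"
proof (cases "y + 1 < n")
  case True then show ?thesis by (simp add: binomial_eq_0)
next
  case F: False
  show ?thesis
  proof (cases "y + 1 = n")
    case True then show ?thesis by simp
  next
    case False
    then have yn: "n \<le> y" using F by simp
    show ?thesis
    proof (cases n)
      case 0 then show ?thesis by simp
    next
      case (Suc n')
      define a where "a = y choose n'"
      define b where "b = y choose Suc n'"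
      have h: "Suc y * a = (a + b) * Suc n'"
        unfolding a_def b_def using Suc_times_binomial_eq[of y n'] by simp
      have "Suc (Suc n') * a \<le> Suc y * a" using yn Suc by (intro mult_le_mono1) simp
      then have "a \<le> Suc n' * b" using h by (simp add: algebra_simps)
      then have "(y + 1 choose n) \<le> (n + 1) * (y choose n)"
        using Suc unfolding a_def b_def by simp
      then show ?thesis by simp
    qed
  qed
qed

lemma E_up: "m < n \<Longrightarrow> eulerian n m \<le> (m + 1) ^ n"
proof -
  assume mn: "m < n"
  let ?j = "n - 1 - m"
  have "eulerian n m = eulerian n ?j * ((m + 1 + ?j) choose n)"
    using E_sym[OF mn] mn by simp
  also have "\<dots> \<le> (\<Sum>j\<le>n. eulerian n j * ((m + 1 + j) choose n))"
    by (rule member_le_sum) auto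
  also have "\<dots> = (m + 1) ^ n" using worpitzky[of "m + 1" n] by simp
  finally show ?thesis .
qed

lemma E_low: "m < n \<Longrightarrow> (m + 1) ^ n \<le> eulerian n m + (n + 1) * m ^ n"
proof -
  assume mn: "m < n"
  let ?j = "n - 1 - m"
  have "(m + 1) ^ n = (\<Sum>j\<le>n. eulerian n j * ((m + j + 1) choose n))"
    using worpitzky[of "m + 1" n] by (simp add: algebra_simps)
  also have "\<dots> \<le> (\<Sum>j\<le>n. eulerian n j * ((if m + j + 1 = n then 1 else 0) + (n + 1) * ((m + j) choose n)))"
    by (intro sum_mono mult_le_mono2 binom_step_le)
  also have "\<dots> = (\<Sum>j\<le>n. if j = ?j then eulerian n j else 0) + (n + 1) * (\<Sum>j\<le>n. eulerian n j * ((m + j) choose n))"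
  proof -
    have "\<And>j. (m + j + 1 = n) = (j = ?j)" using mn by auto
    then have "(\<Sum>j\<le>n. eulerian n j * ((if m + j + 1 = n then 1 else 0) + (n + 1) * ((m + j) choose n)))
       = (\<Sum>j\<le>n. (if j = ?j then eulerian n j else 0) + (n + 1) * (eulerian n j * ((m + j) choose n)))"
      by (intro sum.cong) (auto simp: algebra_simps)
    then show ?thesis by (simp add: sum.distrib sum_distrib_left)
  qed
  also have "\<dots> = eulerian n ?j + (n + 1) * m ^ n"
  proof -
    have "(\<Sum>j\<le>n. if j = ?j then eulerian n j else 0) = eulerian n ?j"
      by (subst sum.delta) auto
    then show ?thesis using worpitzky[of m n] by simp
  qed
  also have "eulerian n ?j = eulerian n m" using E_sym[OF mn] by simp
  finally show ?thesis .
qed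

lemma fin_ineq:
  assumes "3 \<le> a" "4 * B \<le> a ^ 2"
  shows "2 * int B < int a * (int a - 1)"
proof -
  have h1: "4 * int B \<le> int a * int a"
  proof -
    have "int (4 * B) \<le> int (a ^ 2)" using assms(2) by (simp only: of_nat_le_iff)
    then show ?thesis by (simp add: power2_eq_square)
  qed
  have h2: "3 * int a \<le> int a * int a" using assms(1) by (intro mult_right_mono) auto
  have "int a * (int a - 1) = int a * int a - int a" by (simp add: algebra_simps)
  then show ?thesis using h1 h2 assms(1) by linarith
qed

lemma L2_sq: "k < n \<Longrightarrow> (k+1)^(2*(n-k-1)) \<le> (eulerian n k)^2"
proof -
  assume "k < n"
  then have "(k+1)^(n-k-1) \<le> eulerian n k" by (rule E_L2)
  then have "((k+1)^(n-k-1))^2 \<le> (eulerian n k)^2" by (rule power_mono) simp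
  then show ?thesis by (simp add: power_mult[symmetric] mult.commute)
qed

lemma caseA:
  assumes "2 \<le> k" "3*k+2 \<le> n" "n \<le> 4*k+2"
  shows "4 * eulerian n (3*k+1) \<le> (eulerian n k)^2"
proof -
  have "eulerian n (3*k+1) = eulerian n (n - 1 - (3*k+1))" using E_sym[of "3*k+1" n] assms by simp
  also have "\<dots> \<le> (n - 1 - (3*k+1) + 1) ^ n" using E_up[of "n - 1 - (3*k+1)" n] assms by simp
  also have "\<dots> \<le> (k+1) ^ n" using assms by (intro power_mono) auto
  finally have B: "eulerian n (3*k+1) \<le> (k+1)^n" .
  have "(k+1)^2 \<le> (k+1)^(n-2*k-2)" using assms by (intro power_increasing) auto
  moreover have "4 \<le> (k+1)^2" using assms power_mono[of 3 "k+1" 2] by simp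
  ultimately have f: "4 \<le> (k+1)^(n-2*k-2)" by linarith
  have "2*(n-k-1) = n + (n-2*k-2)" using assms by simp
  then have eq: "(k+1)^(2*(n-k-1)) = (k+1)^(n-2*k-2) * (k+1)^n" by (simp add: power_add)
  have "4 * (k+1)^n \<le> (k+1)^(n-2*k-2) * (k+1)^n" by (rule mult_le_mono1[OF f])
  also have "\<dots> = (k+1)^(2*(n-k-1))" using eq by simp
  also have "\<dots> \<le> (eulerian n k)^2" using L2_sq[of k n] assms by simp
  finally have "4 * (k+1)^n \<le> (eulerian n k)^2" .
  then show ?thesis using B by linarith
qed

lemma pow_7_6:
  assumes "19 \<le> e" shows "12 * 6^e \<le> (7::nat)^e"
  using assms
proof (induction e rule: dec_induct)
  case base then show ?case by simp
next
  case (step e)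
  have "(12::nat) * 6^Suc e = 6 * (12 * 6^e)" by simp
  also have "\<dots> \<le> 6 * (7::nat)^e" using step.IH by simp
  also have "\<dots> \<le> 7 * (7::nat)^e" by simp
  also have "\<dots> = (7::nat)^Suc e" by simp
  finally show ?case .
qed

lemma poly_k: "9 \<le> (k::nat) \<Longrightarrow> 7 * (3*k+2)^2 \<le> 6 * (k+1)^(3::nat)"
proof -
  assume "9 \<le> k"
  then obtain t where t: "k = 9 + t" using le_Suc_ex[of 9 k] by auto
  show ?thesis unfolding t by (simp add: power2_eq_square power3_eq_cube algebra_simps)
qed

lemma caseB_pow:
  assumes "9 \<le> k" "4*k+3 \<le> n"
  shows "4*(3*k+2)^n \<le> (k+1)^(2*(n-k-1))"
  using assms(2)
proof (induction n rule: dec_induct)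
  case base
  define e where "e = 2*k+1"
  define X where "X = (3*k+2)^2"
  define Y where "Y = (k+1)^3"
  have e19: "19 \<le> e" using assms unfolding e_def by simp
  have "(7 * X)^e \<le> (6 * Y)^e" unfolding X_def Y_def using poly_k[OF assms(1)] by (intro power_mono) auto
  then have c1: "7^e * X^e \<le> 6^e * Y^e" by (simp add: power_mult_distrib)
  have "6^e * (12 * X^e) = (12 * 6^e) * X^e" by (simp add: algebra_simps)
  also have "\<dots> \<le> 7^e * X^e" using pow_7_6[OF e19] by (rule mult_le_mono1)
  also have "\<dots> \<le> 6^e * Y^e" by (rule c1)
  finally have "6^e * (12 * X^e) \<le> 6^e * Y^e" .
  then have XY: "12 * X^e \<le> Y^e" by simp
  have "4*(3*k+2)^(4*k+3) = 4*(3*k+2) * X^e"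
  proof -
    have p1: "X^e = (3*k+2)^(2*(2*k+1))" unfolding X_def e_def by (rule power_mult[symmetric])
    have "4*k+3 = Suc (2*(2*k+1))" by simp
    then have eqn: "(3*k+2)^(4*k+3) = (3*k+2) * (3*k+2)^(2*(2*k+1))" by (simp only: power_Suc)
    show ?thesis by (simp only: eqn p1 mult.assoc)
  qed
  also have "\<dots> \<le> (k+1) * (12 * X^e)" by (simp add: algebra_simps)
  also have "\<dots> \<le> (k+1) * Y^e" by (rule mult_le_mono2[OF XY])
  also have "\<dots> = (k+1)^(2*(4*k+3-k-1))" unfolding Y_def e_def
  proof -
    have "2*(4*k+3-k-1) = 1 + 3*(2*k+1)" by simp
    then show "(k+1) * ((k+1)^3)^(2*k+1) = (k+1)^(2*(4*k+3-k-1))"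
      by (simp only: power_add power_mult power_one_right)
  qed
  finally show ?case .
next
  case (step n)
  have h2: "2*(Suc n-k-1) = 2 + 2*(n-k-1)" using step assms by simp
  have E1: "(k+1)^(2*(Suc n-k-1)) = (k+1)^2 * (k+1)^(2*(n-k-1))" by (simp only: h2 power_add)
  have P: "3*k+2 \<le> (k+1)^2"
  proof -
    have "9 * k \<le> k * k" using assms(1) by (rule mult_right_mono) simp
    moreover have "(k+1)^2 = k*k + 2*k + 1" by (simp add: power2_eq_square algebra_simps)
    ultimately show ?thesis using assms(1) by linarith
  qed
  have "4*(3*k+2)^Suc n = (3*k+2) * (4*(3*k+2)^n)" by simp
  also have "\<dots> \<le> (k+1)^2 * (k+1)^(2*(n-k-1))" by (rule mult_le_mono[OF P step.IH])
  also have "\<dots> = (k+1)^(2*(Suc n-k-1))" by (rule E1[symmetric])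
  finally show ?case .
qed

lemma caseB:
  assumes "9 \<le> k" "4*k+3 \<le> n"
  shows "4 * eulerian n (3*k+1) \<le> (eulerian n k)^2"
proof -
  have "eulerian n (3*k+1) \<le> (3*k+2)^n" using E_up[of "3*k+1" n] assms by simp
  then have "4 * eulerian n (3*k+1) \<le> 4*(3*k+2)^n" by simp
  also have "\<dots> \<le> (k+1)^(2*(n-k-1))" by (rule caseB_pow[OF assms])
  also have "\<dots> \<le> (eulerian n k)^2" using L2_sq[of k n] assms by simp
  finally show ?thesis .
qed

lemma tail1:
  assumes "k \<le> N" "N \<le> n" "c*(N+1)*k^N \<le> (c-1)*(k+1)^N"
  shows "c*(n+1)*k^n \<le> (c-1)*(k+1)^n"
  using assms(2)
proof (induction n rule: dec_induct)
  case base then show ?case using assms(3) .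
next
  case (step n)
  have kn: "k \<le> n" using step assms(1) by simp
  have q: "(n+2)*k \<le> (n+1)*(k+1)" using kn by (simp add: algebra_simps)
  have "c*(Suc n+1)*k^Suc n = (c*k^n) * ((n+2)*k)" by (simp add: algebra_simps)
  also have "\<dots> \<le> (c*k^n) * ((n+1)*(k+1))" by (rule mult_le_mono2[OF q])
  also have "\<dots> = (c*(n+1)*k^n) * (k+1)" by (simp add: algebra_simps)
  also have "\<dots> \<le> ((c-1)*(k+1)^n) * (k+1)" by (rule mult_le_mono1[OF step.IH])
  also have "\<dots> = (c-1)*(k+1)^Suc n" by (simp only: mult.assoc power_Suc2)
  finally show ?case .
qed

lemma tail2:
  assumes "N \<le> n" "3*k+2 \<le> (k+1)^2" "d*(3*k+2)^N \<le> (k+1)^(2*N)"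
  shows "d*(3*k+2)^n \<le> ((k::nat)+1)^(2*n)"
  using assms(1)
proof (induction n rule: dec_induct)
  case base then show ?case using assms(3) .
next
  case (step n)
  have "d*(3*k+2)^Suc n = (3*k+2) * (d*(3*k+2)^n)" by (simp only: power_Suc mult.left_commute)
  also have "\<dots> \<le> (k+1)^2 * (k+1)^(2*n)" by (rule mult_le_mono[OF assms(2) step.IH])
  also have "\<dots> = (k+1)^(2*Suc n)" by (simp add: power_add[symmetric])
  finally show ?case .
qed

lemma caseC:
  assumes "1 \<le> c" "k \<le> N" "N \<le> n" "3*k+2 \<le> (k+1)^2"
    "c*(N+1)*k^N \<le> (c-1)*(k+1)^N" "4*c^2*(3*k+2)^N \<le> (k+1)^(2*N)" "3*k+1 < n"
  shows "4 * eulerian n (3*k+1) \<le> (eulerian n k)^2"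
proof -
  define a where "a = eulerian n k"
  define X where "X = (k+1)^n"
  have kn: "k < n" using assms(7) by simp
  have low: "X \<le> a + (n+1)*k^n" unfolding X_def a_def using E_low[OF kn] by simp
  have t1: "c*(n+1)*k^n \<le> (c-1)*X" unfolding X_def using tail1[OF assms(2,3,5)] .
  obtain c' where c': "c = Suc c'" using assms(1) by (cases c) auto
  have "c*X \<le> c*(a + (n+1)*k^n)" by (rule mult_le_mono2[OF low])
  also have "\<dots> = c*a + c*(n+1)*k^n" by (simp add: algebra_simps)
  finally have "c*X \<le> c*a + (c-1)*X" using t1 by linarith
  then have Xa: "X \<le> c*a" unfolding c' by simp
  have "(k+1)^(2*n) = X^2" unfolding X_def by (simp add: power_mult[symmetric] mult.commute)
  also have "\<dots> \<le> (c*a)^2" using Xa by (rule power_mono) simp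
  finally have sq: "(k+1)^(2*n) \<le> c^2 * a^2" by (simp add: power_mult_distrib)
  have "4*c^2*(3*k+2)^n \<le> (k+1)^(2*n)" by (rule tail2[OF assms(3,4,6)])
  moreover have "eulerian n (3*k+1) \<le> (3*k+2)^n" using E_up[of "3*k+1" n] assms(7) by simp
  ultimately have "c^2 * (4 * eulerian n (3*k+1)) \<le> c^2 * a^2"
    using sq by (smt (verit) le_trans mult.assoc mult.commute mult_le_mono2)
  then show ?thesis unfolding a_def using assms(1) by simp
qed

lemma helper_lu: "l \<le> a \<Longrightarrow> B \<le> u \<Longrightarrow> 4*u \<le> l^2 \<Longrightarrow> 4*B \<le> (a::nat)^2"
proof -
  assume h: "l \<le> a" "B \<le> u" "4*u \<le> l^2"
  have "l^2 \<le> a^2" using h(1) by (rule power_mono) simp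
  then show ?thesis using h by linarith
qed

lemma k2_small:
  assumes "11 \<le> n" "n \<le> 23"
  shows "4 * eulerian n 7 \<le> (eulerian n 2)^2"
proof -
  have l: "3^n - (n+1)*2^n \<le> eulerian n 2" using E_low[of 2 n] assms by simp
  have u1: "eulerian n 7 \<le> 8^n" using E_up[of 7 n] assms by simp
  have "eulerian n 7 = eulerian n (n - 8)" using E_sym[of 7 n] assms by simp
  also have "\<dots> \<le> (n - 8 + 1)^n" using E_up[of "n-8" n] assms by simp
  finally have u2': "eulerian n 7 \<le> (n - 8 + 1)^n" .
  have "n - 8 + 1 = n - 7" using assms by simp
  then have u2: "eulerian n 7 \<le> (n - 7)^n" using u2' by simp
  have cases: "n = 11 \<or> n = 12 \<or> n = 13 \<or> n = 14 \<or> n = 15 \<or> n = 16 \<or> n = 17 \<or> n = 18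
     \<or> n = 19 \<or> n = 20 \<or> n = 21 \<or> n = 22 \<or> n = 23" using assms by arith
  have num: "4*(n-7)^n \<le> (3^n - (n+1)*2^n)^2 \<or> 4*8^n \<le> (3^n - (n+1)*2^n)^2"
    using cases by (elim disjE) simp_all
  then show ?thesis using helper_lu[OF l u1] helper_lu[OF l u2] by blast
qed

lemma caseC_k:
  assumes "2 \<le> k" "k \<le> 8" "4*k+3 \<le> n"
  shows "4 * eulerian n (3*k+1) \<le> (eulerian n k)^2"
proof -
  have "k = 2 \<or> k = 3 \<or> k = 4 \<or> k = 5 \<or> k = 6 \<or> k = 7 \<or> k = 8" using assms(1,2) by arith
  then show ?thesis
  proof (elim disjE)
    assume k: "k = 2"
    show ?thesis
    proof (cases "n \<le> 23")
      case True then show ?thesis using k2_small[of n] assms k by simp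
    next
      case False then show ?thesis using caseC[of 2 k 24 n] assms k by simp
    qed
  next
    assume k: "k = 3" then show ?thesis using caseC[of 2 k 15 n] assms by simp
  next
    assume k: "k = 4" then show ?thesis using caseC[of 2 k 19 n] assms by simp
  next
    assume k: "k = 5" then show ?thesis using caseC[of 2 k 23 n] assms by simp
  next
    assume k: "k = 6" then show ?thesis using caseC[of 2 k 27 n] assms by simp
  next
    assume k: "k = 7" then show ?thesis using caseC[of 3 k 31 n] assms by simp
  next
    assume k: "k = 8" then show ?thesis using caseC[of 3 k 35 n] assms by simp
  qed
qed

lemma main_nat:
  assumes "2 \<le> k" "k + 3 \<le> n"
  shows "3 \<le> eulerian n k \<and> 4 * eulerian n (3*k+1) \<le> (eulerian n k)^2"
proof
  have "(k+1)^1 \<le> (k+1)^(n-k-1)" using assms by (intro power_increasing) auto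
  then show "3 \<le> eulerian n k" using E_L2[of k n] assms by simp
next
  show "4 * eulerian n (3*k+1) \<le> (eulerian n k)^2"
  proof (cases "n \<le> 3*k+1")
    case True
    then have "eulerian n (3*k+1) = 0" using E_zero[of n "3*k+1"] assms by simp
    then show ?thesis by simp
  next
    case F1: False
    show ?thesis
    proof (cases "n \<le> 4*k+2")
      case True then show ?thesis using caseA[of k n] F1 assms by simp
    next
      case F2: False
      show ?thesis
      proof (cases "9 \<le> k")
        case True then show ?thesis using caseB[of k n] F2 by simp
      next
        case False then show ?thesis using caseC_k[of k n] F2 assms by simp
      qed
    qed
  qed
qed

theorem mainTheorem20:
  fixes n r :: nat
  assumes "3 \<le> r" and "r + 2 \<le> n"
  shows "int (eulerian n (r - 1)) * (int (eulerian n (r - 1)) - 1) > 2 * int (eulerian n (3 * r - 2))"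
proof -
  have k: "2 \<le> r - 1" "r - 1 + 3 \<le> n" using assms by auto
  have e: "3 * r - 2 = 3 * (r - 1) + 1" using assms by simp
  show ?thesis using main_nat[OF k] fin_ineq unfolding e by blast
qed

end
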